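(* Consider $K$ sensors, each taking a binary decision $b_k\in\{0,1\}$, $k=1,\dots,K$, with conditionally i.i.d. decisions satisfying $P_D\triangleq P(b_k=1\mid\mathcal H_1)>P_F\triangleq P(b_k=1\mid\mathcal H_0)$. Each decision is sent over a binary symmetric channel with bit-error probability $P_{e,k}\le \tfrac12$, and the fusion center observes $y_k\in\{0,1\}$, with $y_k=b_k$ with probability $1-P_{e,k}$ and $y_k=1-b_k$ with probability $P_{e,k}$. For $P_1\in[0,1]$ let $\alpha_k(P_1)=(1-2P_{e,k})P_1+P_{e,k}$ and $\beta_k(P_1)=1-\alpha_k(P_1)$. Consider the statistics $$\Lambda_{\mathrm{LRT}}=\sum_{k=1}^K\Big\{y_k\ln\frac{\alpha_k(P_D)}{\alpha_k(P_F)}+(1-y_k)\ln\frac{\beta_k(P_D)}{\beta_k(P_F)}\Big\},\qquad \Lambda_{\mathrm{IS}}=\sum_{k=1}^K(2y_k-1)\ln\frac{1-P_{e,k}}{P_{e,k}},$$ $$\Lambda_{\mathrm{LOD}}=\Big(\sum_{k=1}^K\frac{(1-2P_{e,k})[(y_k-P_{e,k})-(1-2P_{e,k})P_F]}{\alpha_k(P_F)\beta_k(P_F)}\Big)\Big(\sum_{k=1}^K\frac{(1-2P_{e,k})^2}{\alpha_k(P_F)\beta_k(P_F)}\Big)^{-1/2},$$ $$\Lambda_{\mathrm{Wu}}=\hat P_D-P_F,\quad \hat P_D=\frac1K\sum_{k=1}^K[(1+2P_{e,k})y_k-P_{e,k}].$$ Then, when the SNR is low at each link (i.e. each $P_{e,k}$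 is close to $\tfrac12$, so that each per-sensor coefficient of the statistics may be replaced by its first-order Taylor expansion around $P_{e,k}=\tfrac12$), $\Lambda_{\mathrm{IS}}$ and $\Lambda_{\mathrm{LOD}}$ approach $\Lambda_{\mathrm{LRT}}$ (their low-SNR approximations are equivalent to that of $\Lambda_{\mathrm{LRT}}$, hence yield the same detection performance), while $\Lambda_{\mathrm{Wu}}$ does not. The $P_{e,k}$ need not be equal.
   Context: Two statistics are called equivalent if they are equal up to a scaling factor and an additive term, both finite and independent of $\boldsymbol y=(y_1,\dots,y_K)$, so that threshold tests based on them have the same performance. Low SNR at link $k$ corresponds to $P_{e,k}\to\tfrac12$. Each statistic is used in a test comparing it with a threshold to decide between $\mathcal H_0$ and $\mathcal H_1$. *)

theory Defs
  imports "HOL-Analysis.Analysis"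
begin

definition alpha_ch :: "real \<Rightarrow> real \<Rightarrow> real" where
  "alpha_ch p P1 = (1 - 2 * p) * P1 + p"

definition beta_ch :: "real \<Rightarrow> real \<Rightarrow> real" where
  "beta_ch p P1 = 1 - alpha_ch p P1"

definition lowsnr :: "(real \<Rightarrow> real) \<Rightarrow> real \<Rightarrow> real" where
  "lowsnr g p = g (1/2) + deriv g (1/2) * (p - 1/2)"

definition lrt_term :: "real \<Rightarrow> real \<Rightarrow> real \<Rightarrow> real \<Rightarrow> real" where
  "lrt_term PD PF yk p =
     yk * ln (alpha_ch p PD / alpha_ch p PF) + (1 - yk) * ln (beta_ch p PD / beta_ch p PF)"

definition is_term :: "real \<Rightarrow> real \<Rightarrow> real" where
  "is_term yk p = (2 * yk - 1) * ln ((1 - p) / p)"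

definition lod_term :: "real \<Rightarrow> real \<Rightarrow> real \<Rightarrow> real" where
  "lod_term PF yk p =
     (1 - 2 * p) * ((yk - p) - (1 - 2 * p) * PF) / (alpha_ch p PF * beta_ch p PF)"

definition lod_norm :: "nat \<Rightarrow> real \<Rightarrow> (nat \<Rightarrow> real) \<Rightarrow> real" where
  "lod_norm K PF pe = (\<Sum>k<K. (1 - 2 * pe k)^2 / (alpha_ch (pe k) PF * beta_ch (pe k) PF))"

definition wu_term :: "nat \<Rightarrow> real \<Rightarrow> real \<Rightarrow> real" where
  "wu_term K yk p = ((1 + 2 * p) * yk - p) / real K"

text \<open>Exact statistics (sensors indexed 0..K-1).\<close>
definition Lambda_LRT :: "nat \<Rightarrow> real \<Rightarrow> real \<Rightarrow> (nat \<Rightarrow> real) \<Rightarrow> (nat \<Rightarrow> real) \<Rightarrow> real" where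
  "Lambda_LRT K PD PF pe y = (\<Sum>k<K. lrt_term PD PF (y k) (pe k))"

definition Lambda_IS :: "nat \<Rightarrow> (nat \<Rightarrow> real) \<Rightarrow> (nat \<Rightarrow> real) \<Rightarrow> real" where
  "Lambda_IS K pe y = (\<Sum>k<K. is_term (y k) (pe k))"

definition Lambda_LOD :: "nat \<Rightarrow> real \<Rightarrow> (nat \<Rightarrow> real) \<Rightarrow> (nat \<Rightarrow> real) \<Rightarrow> real" where
  "Lambda_LOD K PF pe y = (\<Sum>k<K. lod_term PF (y k) (pe k)) / sqrt (lod_norm K PF pe)"

definition Lambda_Wu :: "nat \<Rightarrow> real \<Rightarrow> (nat \<Rightarrow> real) \<Rightarrow> (nat \<Rightarrow> real) \<Rightarrow> real" where
  "Lambda_Wu K PF pe y = (\<Sum>k<K. wu_term K (y k) (pe k)) - PF"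

text \<open>Low-SNR approximations: each per-sensor coefficient is replaced by its first-order
  Taylor expansion around P_{e,k} = 1/2; y-independent global factors
  (the LOD normaliser and the constant -P_F of Wu) are kept unchanged.\<close>
definition LRT_low :: "nat \<Rightarrow> real \<Rightarrow> real \<Rightarrow> (nat \<Rightarrow> real) \<Rightarrow> (nat \<Rightarrow> real) \<Rightarrow> real" where
  "LRT_low K PD PF pe y = (\<Sum>k<K. lowsnr (lrt_term PD PF (y k)) (pe k))"

definition IS_low :: "nat \<Rightarrow> (nat \<Rightarrow> real) \<Rightarrow> (nat \<Rightarrow> real) \<Rightarrow> real" where
  "IS_low K pe y = (\<Sum>k<K. lowsnr (is_term (y k)) (pe k))"

definition LOD_low :: "nat \<Rightarrow> real \<Rightarrow> (nat \<Rightarrow> real) \<Rightarrow> (nat \<Rightarrow> real) \<Rightarrow> real" where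
  "LOD_low K PF pe y = (\<Sum>k<K. lowsnr (lod_term PF (y k)) (pe k)) / sqrt (lod_norm K PF pe)"

definition Wu_low :: "nat \<Rightarrow> real \<Rightarrow> (nat \<Rightarrow> real) \<Rightarrow> (nat \<Rightarrow> real) \<Rightarrow> real" where
  "Wu_low K PF pe y = (\<Sum>k<K. lowsnr (wu_term K (y k)) (pe k)) - PF"

definition equiv_stat :: "nat \<Rightarrow> ((nat \<Rightarrow> real) \<Rightarrow> real) \<Rightarrow> ((nat \<Rightarrow> real) \<Rightarrow> real) \<Rightarrow> bool" where
  "equiv_stat K S T \<longleftrightarrow>
     (\<exists>a b. a \<noteq> 0 \<and> (\<forall>y. (\<forall>k<K. y k \<in> {0, 1}) \<longrightarrow> S y = a * T y + b))"

end

theory Submission imports Defs begin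
lemma lowsnr_eq: "(g has_real_derivative D) (at (1/2)) \<Longrightarrow> lowsnr g p = g (1/2) + D * (p - 1/2)"
  unfolding lowsnr_def by (simp add: DERIV_imp_deriv)

lemma lrt_low: "lowsnr (lrt_term PD PF y) p = 2*(PD-PF)*(2*y-1)*(1-2*p)"
proof -
  have "(lrt_term PD PF y has_real_derivative 4*(PD-PF)*(1-2*y)) (at (1/2))"
    unfolding lrt_term_def[abs_def] beta_ch_def alpha_ch_def
    by ((rule derivative_eq_intros refl | simp)+, simp add: field_simps)
  from lowsnr_eq[OF this, of p] show ?thesis by (simp add: lrt_term_def alpha_ch_def beta_ch_def algebra_simps)
qed

lemma is_low: "lowsnr (is_term y) p = 2*(2*y-1)*(1-2*p)"
proof -
  have "(is_term y has_real_derivative -4*(2*y-1)) (at (1/2))"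
    unfolding is_term_def[abs_def]
    by (rule derivative_eq_intros refl | simp)+
  from lowsnr_eq[OF this] show ?thesis by (simp add: is_term_def algebra_simps)
qed

lemma lod_low: "lowsnr (lod_term PF y) p = 2*(2*y-1)*(1-2*p)"
proof -
  have "(lod_term PF y has_real_derivative -4*(2*y-1)) (at (1/2))"
    unfolding lod_term_def[abs_def] beta_ch_def alpha_ch_def
    by (rule derivative_eq_intros refl | simp)+
  from lowsnr_eq[OF this] show ?thesis by (simp add: lod_term_def alpha_ch_def beta_ch_def algebra_simps)
qed

lemma wu_low: "K > 0 \<Longrightarrow> lowsnr (wu_term K y) p = wu_term K y p"
proof -
  assume K: "K > 0"
  have "(wu_term K y has_real_derivative (2*y-1)/real K) (at (1/2))"
    unfolding wu_term_def[abs_def]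
    using K by (auto intro!: derivative_eq_intros simp: field_simps)
  from lowsnr_eq[OF this, of p] K show ?thesis by (simp add: wu_term_def divide_simps) (simp add: algebra_simps)
qed

lemma ab_pos: assumes "0 < p" "p \<le> 1/2" "0 \<le> P" "P \<le> 1"
  shows "alpha_ch p P * beta_ch p P > 0"
proof -
  have "alpha_ch p P \<ge> p" using assms mult_nonneg_nonneg[of "1-2*p" P] unfolding alpha_ch_def by linarith
  moreover have "(1-2*p)*P \<le> (1-2*p)" using assms by (intro mult_left_le) auto
  then have "alpha_ch p P \<le> 1 - p" unfolding alpha_ch_def by linarith
  ultimately show ?thesis using assms unfolding beta_ch_def by (intro mult_pos_pos) auto
qed

lemma sum_upd: "i<(K::nat) \<Longrightarrow> (\<Sum>k<K. f k (if k=i then 1 else 0)) = (\<Sum>k<K. f k (0::real)) + (f i 1 - f i 0 :: real)"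
proof -
  assume i: "i<K"
  have "(\<Sum>k<K. f k (if k=i then 1 else 0)) = (\<Sum>k<K. f k 0 + (if k=i then f i 1 - f i 0 else 0))"
    by (rule sum.cong) auto
  also have "\<dots> = (\<Sum>k<K. f k 0) + (\<Sum>k<K. if k=i then f i 1 - f i 0 else 0)" by (simp add: sum.distrib)
  also have "(\<Sum>k<K. if k=i then f i 1 - f i 0 else 0) = f i 1 - f i 0"
    using i by (simp add: sum.delta[OF finite_lessThan])
  finally show ?thesis .
qed

theorem proposition1:
  fixes K :: nat and PD PF :: real and pe :: "nat \<Rightarrow> real"
  assumes "K \<ge> 1"
    and "0 \<le> PF" and "PF < PD" and "PD \<le> 1"
    and "\<forall>k<K. 0 < pe k \<and> pe k \<le> 1/2"
  shows "equiv_stat K (IS_low K pe) (LRT_low K PD PF pe)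
       \<and> equiv_stat K (LOD_low K PF pe) (LRT_low K PD PF pe)
       \<and> ((\<exists>i<K. \<exists>j<K. pe i \<noteq> pe j) \<longrightarrow> \<not> equiv_stat K (Wu_low K PF pe) (LRT_low K PD PF pe))"
proof -
  define d where "d = PD - PF"
  have d: "d > 0" using assms d_def by auto
  have LRT: "LRT_low K PD PF pe y = d * IS_low K pe y" for y
    unfolding LRT_low_def IS_low_def lrt_low is_low d_def sum_distrib_left
    by (rule sum.cong) (auto simp: algebra_simps)
  have IS: "IS_low K pe y = (1/d) * LRT_low K PD PF pe y" for y using LRT d by simp
  have LOD: "LOD_low K PF pe y = IS_low K pe y / sqrt (lod_norm K PF pe)" for y
    unfolding LOD_low_def IS_low_def lod_low is_low ..
  have E1: "equiv_stat K (IS_low K pe) (LRT_low K PD PF pe)"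
    unfolding equiv_stat_def using d IS by (intro exI[of _ "1/d"] exI[of _ 0]) auto
  have E2: "equiv_stat K (LOD_low K PF pe) (LRT_low K PD PF pe)"
  proof (cases "lod_norm K PF pe = 0")
    case True
    have "\<forall>k\<in>{..<K}. (1 - 2 * pe k)^2 / (alpha_ch (pe k) PF * beta_ch (pe k) PF) = 0"
    proof
      fix k assume k: "k \<in> {..<K}"
      have pos: "alpha_ch (pe k') PF * beta_ch (pe k') PF > 0" if "k' < K" for k'
        using assms that by (intro ab_pos) auto
      have nn: "\<forall>k\<in>{..<K}. 0 \<le> (1 - 2 * pe k)^2 / (alpha_ch (pe k) PF * beta_ch (pe k) PF)"
        using pos by (auto intro!: divide_nonneg_pos)
      show "(1 - 2 * pe k)^2 / (alpha_ch (pe k) PF * beta_ch (pe k) PF) = 0"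
        using True nn k sum_nonneg_eq_0_iff[of "{..<K}" "\<lambda>k. (1 - 2 * pe k)^2 / (alpha_ch (pe k) PF * beta_ch (pe k) PF)"]
        unfolding lod_norm_def by blast
    qed
    have pe: "\<forall>k<K. pe k = 1/2"
    proof (intro allI impI)
      fix k assume k: "k < K"
      have "alpha_ch (pe k) PF * beta_ch (pe k) PF > 0" using assms k by (intro ab_pos) auto
      with \<open>\<forall>k\<in>{..<K}. _ = 0\<close> k have "(1 - 2 * pe k)^2 = 0" by auto
      then show "pe k = 1/2" by simp
    qed
    have "LRT_low K PD PF pe y = 0" for y unfolding LRT_low_def lrt_low
      using pe by (intro sum.neutral) auto
    then show ?thesis unfolding equiv_stat_def using LOD True by (intro exI[of _ 1] exI[of _ 0]) auto
  next
    case False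
    show ?thesis unfolding equiv_stat_def using LOD IS False d
      by (intro exI[of _ "1/(d * sqrt (lod_norm K PF pe))"] exI[of _ 0]) auto
  qed
  have E3: "\<not> equiv_stat K (Wu_low K PF pe) (LRT_low K PD PF pe)" if ex: "\<exists>i<K. \<exists>j<K. pe i \<noteq> pe j"
  proof
    assume "equiv_stat K (Wu_low K PF pe) (LRT_low K PD PF pe)"
    then obtain a b where a: "a \<noteq> 0" and ab: "\<And>y. (\<forall>k<K. y k \<in> {0, 1}) \<Longrightarrow> Wu_low K PF pe y = a * LRT_low K PD PF pe y + b"
      unfolding equiv_stat_def by blast
    have K0: "K > 0" using assms by auto
    define c where "c = 4 * a * d"
    have c: "c \<noteq> 0" using a d c_def by auto
    have key: "(1 + 2 * pe i) / real K = c * (1 - 2 * pe i)" if i: "i < K" for i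
    proof -
      have h0: "Wu_low K PF pe (\<lambda>_. 0) = a * LRT_low K PD PF pe (\<lambda>_. 0) + b" by (rule ab) auto
      have h1: "Wu_low K PF pe (\<lambda>k. if k=i then 1 else 0) = a * LRT_low K PD PF pe (\<lambda>k. if k=i then 1 else 0) + b" by (rule ab) auto
      have w1: "Wu_low K PF pe (\<lambda>k. if k=i then 1 else 0) = Wu_low K PF pe (\<lambda>_. 0) + (1 + 2 * pe i) / real K"
        unfolding Wu_low_def wu_low[OF K0]
        using sum_upd[OF i, of "\<lambda>k y. wu_term K y (pe k)"] by (simp add: wu_term_def diff_divide_distrib) (simp only: add_divide_distrib[symmetric], simp add: algebra_simps)
      have l1: "LRT_low K PD PF pe (\<lambda>k. if k=i then 1 else 0) = LRT_low K PD PF pe (\<lambda>_. 0) + 4 * d * (1 - 2 * pe i)"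
        unfolding LRT_low_def lrt_low
        using sum_upd[OF i, of "\<lambda>k y. 2 * (PD - PF) * (2 * y - 1) * (1 - 2 * pe k)"] by (simp add: d_def algebra_simps)
      show ?thesis using h0 h1 w1 l1 unfolding c_def by (simp add: algebra_simps)
    qed
    obtain i j where ij: "i<K" "j<K" "pe i \<noteq> pe j" using ex by blast
    have "(1 + 2 * pe i) / real K * (1 - 2 * pe j) = (1 + 2 * pe j) / real K * (1 - 2 * pe i)"
    proof -
      have "(1 + 2 * pe i) / real K * (1 - 2 * pe j) = c * (1 - 2 * pe i) * (1 - 2 * pe j)"
        using key[OF ij(1)] by simp
      moreover have "(1 + 2 * pe j) / real K * (1 - 2 * pe i) = c * (1 - 2 * pe j) * (1 - 2 * pe i)"
        using key[OF ij(2)] by simp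
      ultimately show ?thesis by simp
    qed
    then have "(1 + 2 * pe i) * (1 - 2 * pe j) = (1 + 2 * pe j) * (1 - 2 * pe i)"
      using K0 by (simp add: field_simps)
    then have "pe i = pe j" by (simp add: algebra_simps)
    then show False using ij by simp
  qed
  show ?thesis using E1 E2 E3 by blast
qed

end
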